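(* For any discrete memoryless channel $Q$ with capacity $C(Q)>0$ (in the asynchronous communication model described in the context), every rate $R\in(0,C(Q))$ is achievable at some strictly positive asynchronism exponent; i.e., there is $\alpha>0$ that is achievable at rate $R$.
   Context: Model. A discrete memoryless channel has finite input alphabet $\mathcal X$, finite output alphabet $\mathcal Y$, transition probabilities $Q(y|x)$, and a distinguished "noise" input symbol $\star\in\mathcal X$; for every $y\in\mathcal Y$ there is $x$ with $Q(y|x)>0$. $C(Q)$ is the capacity of the ordinary (synchronized) channel. A code consists of $M\ge2$ equally likely messages, codewords $c^N(m)\in\mathcal X^N$, and a sequential decoder. The asynchronism level is an integer $A\ge1$: the start time $\nu$ is uniform on $\{1,\dots,A\}$, independent of the message. Given message $m$ and $\nu$, outputs $Y_1,Y_2,\dots$ are independent with $Y_i\sim Q(\cdot|\star)$ if $i\le\nu-1$ or $i\ge\nu+N$, and $Y_i\sim Q(\cdot|c_{i-\nu+1}(m))$ for $\nu\le i\le\nu+N-1$. The receiver knows $A$ and the code but not $\nu$. A decoder is $(\tau,\phi)$ with $\tau$ a stopping time w.r.t. $Y_1,Y_2,\dots$ and $\phi$ a function of $Y_1,\dots,Y_\tau$ returning a message. With $\mathbb P_{m,l},\mathbb E_{m,l}$ conditioning on message $m$ and $\nu=l$: $\mathbb P(\mathcal E)=\frac1{AM}\sum_{m,l}\mathbb P_{m,l}(\phi\neq m)$, $\mathbb E(\tau-\nu)^+=\frac1{AM}\sum_{m,l}\mathbb E_{m,l}(\tau-l)^+$, rate $R=\ln M/\mathbb E(\tau-\nu)^+$.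 An asynchronism exponent $\alpha$ is achievable at rate $R$ if for every $\varepsilon>0$ there is a code with (sufficiently large) blocklength $N$ operating at asynchronism level $A=e^{(\alpha-\varepsilon)N}$ with rate at least $R-\varepsilon$ and $\mathbb P(\mathcal E)\le\varepsilon$. *)

theory Defs
  imports "HOL-Analysis.Analysis"
begin

(* Discrete memoryless channel: Q x y = Q(y|x), finite alphabets 'x, 'y. *)
definition dmc :: "('x::finite \<Rightarrow> 'y::finite \<Rightarrow> real) \<Rightarrow> bool" where
  "dmc Q \<longleftrightarrow> (\<forall>x y. 0 \<le> Q x y) \<and> (\<forall>x. (\<Sum>y\<in>UNIV. Q x y) = 1)"

definition mutual_info :: "('x::finite \<Rightarrow> real) \<Rightarrow> ('x \<Rightarrow> 'y::finite \<Rightarrow> real) \<Rightarrow> real" where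
  "mutual_info P Q = (\<Sum>x\<in>UNIV. \<Sum>y\<in>UNIV.
     (if P x * Q x y = 0 then 0
      else P x * Q x y * ln (Q x y / (\<Sum>x'\<in>UNIV. P x' * Q x' y))))"

definition input_distrs :: "('x::finite \<Rightarrow> real) set" where
  "input_distrs = {P. (\<forall>x. 0 \<le> P x) \<and> (\<Sum>x\<in>UNIV. P x) = 1}"

definition capacity :: "('x::finite \<Rightarrow> 'y::finite \<Rightarrow> real) \<Rightarrow> real" where
  "capacity Q = (SUP P\<in>input_distrs. mutual_info P Q)"

(* Channel input at (1-based) time i, given message m and start time l;
   codeword c m j is the (j+1)-th symbol of codeword m, j < N. *)
definition async_input :: "(nat \<Rightarrow> nat \<Rightarrow> 'x) \<Rightarrow> nat \<Rightarrow> 'x \<Rightarrow> nat \<Rightarrow> nat \<Rightarrow> nat \<Rightarrow> 'x" where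
  "async_input c N star m l i = (if l \<le> i \<and> i < l + N then c m (i - l) else star)"

definition out_prob :: "('x \<Rightarrow> 'y \<Rightarrow> real) \<Rightarrow> (nat \<Rightarrow> nat \<Rightarrow> 'x) \<Rightarrow> nat \<Rightarrow> 'x
    \<Rightarrow> nat \<Rightarrow> nat \<Rightarrow> 'y list \<Rightarrow> real" where
  "out_prob Q c N star m l ys = (\<Prod>i<length ys. Q (async_input c N star m l (Suc i)) (ys ! i))"

(* Stopping time tau = least n with stop (Y_1..Y_n); ys is the observation
   at which tau stops iff first_stop stop ys. *)
definition first_stop :: "('y list \<Rightarrow> bool) \<Rightarrow> 'y list \<Rightarrow> bool" where
  "first_stop stop ys \<longleftrightarrow> stop ys \<and> (\<forall>k<length ys. \<not> stop (take k ys))"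

definition stop_prob :: "('x \<Rightarrow> 'y::finite \<Rightarrow> real) \<Rightarrow> (nat \<Rightarrow> nat \<Rightarrow> 'x) \<Rightarrow> nat \<Rightarrow> 'x
    \<Rightarrow> ('y list \<Rightarrow> bool) \<Rightarrow> nat \<Rightarrow> nat \<Rightarrow> nat \<Rightarrow> real" where
  "stop_prob Q c N star stop m l n =
     (\<Sum>ys\<in>{ys. length ys = n \<and> first_stop stop ys}. out_prob Q c N star m l ys)"

definition err_prob :: "('x \<Rightarrow> 'y::finite \<Rightarrow> real) \<Rightarrow> (nat \<Rightarrow> nat \<Rightarrow> 'x) \<Rightarrow> nat \<Rightarrow> 'x
    \<Rightarrow> ('y list \<Rightarrow> bool) \<Rightarrow> ('y list \<Rightarrow> nat) \<Rightarrow> nat \<Rightarrow> nat \<Rightarrow> ennreal" where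
  "err_prob Q c N star stop dec m l =
     (\<Sum>n. ennreal (\<Sum>ys\<in>{ys. length ys = n \<and> first_stop stop ys \<and> dec ys \<noteq> m}.
                       out_prob Q c N star m l ys))"

(* E_{m,l} (tau - l)^+ ; infinite if tau = infinity with positive probability *)
definition exp_delay :: "('x \<Rightarrow> 'y::finite \<Rightarrow> real) \<Rightarrow> (nat \<Rightarrow> nat \<Rightarrow> 'x) \<Rightarrow> nat \<Rightarrow> 'x
    \<Rightarrow> ('y list \<Rightarrow> bool) \<Rightarrow> nat \<Rightarrow> nat \<Rightarrow> ennreal" where
  "exp_delay Q c N star stop m l =
     (\<Sum>n. ennreal (stop_prob Q c N star stop m l n * real (n - l)))
     + (if (\<Sum>n. ennreal (stop_prob Q c N star stop m l n)) < 1 then top else 0)"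

definition avg_err :: "('x \<Rightarrow> 'y::finite \<Rightarrow> real) \<Rightarrow> 'x \<Rightarrow> nat \<Rightarrow> nat \<Rightarrow> nat
    \<Rightarrow> (nat \<Rightarrow> nat \<Rightarrow> 'x) \<Rightarrow> ('y list \<Rightarrow> bool) \<Rightarrow> ('y list \<Rightarrow> nat) \<Rightarrow> ennreal" where
  "avg_err Q star A M N c stop dec =
     (\<Sum>m<M. \<Sum>l\<in>{1..A}. err_prob Q c N star stop dec m l) / ennreal (real (A * M))"

definition avg_delay :: "('x \<Rightarrow> 'y::finite \<Rightarrow> real) \<Rightarrow> 'x \<Rightarrow> nat \<Rightarrow> nat \<Rightarrow> nat
    \<Rightarrow> (nat \<Rightarrow> nat \<Rightarrow> 'x) \<Rightarrow> ('y list \<Rightarrow> bool) \<Rightarrow> ennreal" where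
  "avg_delay Q star A M N c stop =
     (\<Sum>m<M. \<Sum>l\<in>{1..A}. exp_delay Q c N star stop m l) / ennreal (real (A * M))"

(* Rate ln M / E(tau-nu)^+ \<ge> R - eps is expressed as (R - eps) * E(tau-nu)^+ \<le> ln M
   in ennreal (trivial when R - eps \<le> 0; forces finite delay otherwise). *)
definition achievable_async_exponent ::
    "('x::finite \<Rightarrow> 'y::finite \<Rightarrow> real) \<Rightarrow> 'x \<Rightarrow> real \<Rightarrow> real \<Rightarrow> bool" where
  "achievable_async_exponent Q star \<alpha> R \<longleftrightarrow>
     (\<forall>\<epsilon>>0. \<exists>N0. \<forall>N\<ge>N0. \<exists>(M::nat) (c::nat \<Rightarrow> nat \<Rightarrow> 'x) (stop::'y list \<Rightarrow> bool) (dec::'y list \<Rightarrow> nat).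
        let A = nat \<lceil>exp ((\<alpha> - \<epsilon>) * real N)\<rceil> in
        M \<ge> 2 \<and>
        avg_err Q star A M N c stop dec \<le> ennreal \<epsilon> \<and>
        ennreal (R - \<epsilon>) * avg_delay Q star A M N c stop \<le> ennreal (ln (real M)))"

end

theory Submission
  imports Defs
begin


lemma lsum_prod:
  fixes f :: "nat \<Rightarrow> 'a \<Rightarrow> real"
  assumes "finite S"
  shows "(\<Sum>xs\<in>{xs. set xs \<subseteq> S \<and> length xs = n}. \<Prod>i<n. f i (xs!i))
         = (\<Prod>i<n. \<Sum>a\<in>S. f i a)"
  using assms
proof (induction n arbitrary: f)
  case 0
  have "{xs. set xs \<subseteq> S \<and> length xs = 0} = {[]}" by auto
  then show ?case by simp
next
  case (Suc n)
  have inj: "inj_on (\<lambda>(xs, a). a#xs) ({xs. set xs \<subseteq> S \<and> length xs = n} \<times> S)"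
    by (auto simp: inj_on_def)
  have "(\<Sum>xs\<in>{xs. set xs \<subseteq> S \<and> length xs = Suc n}. \<Prod>i<Suc n. f i (xs!i))
      = (\<Sum>p\<in>{xs. set xs \<subseteq> S \<and> length xs = n} \<times> S. \<Prod>i<Suc n. f i ((snd p # fst p)!i))"
    unfolding lists_length_Suc_eq by (subst sum.reindex[OF inj]) (simp add: case_prod_beta)
  also have "\<dots> = (\<Sum>p\<in>{xs. set xs \<subseteq> S \<and> length xs = n} \<times> S. f 0 (snd p) * (\<Prod>i<n. f (Suc i) (fst p ! i)))"
    by (simp only: prod.lessThan_Suc_shift) simp
  also have "\<dots> = (\<Sum>xs\<in>{xs. set xs \<subseteq> S \<and> length xs = n}. \<Sum>a\<in>S. f 0 a * (\<Prod>i<n. f (Suc i) (xs ! i)))"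
    by (simp add: sum.cartesian_product case_prod_beta)
  also have "\<dots> = (\<Sum>a\<in>S. f 0 a) * (\<Sum>xs\<in>{xs. set xs \<subseteq> S \<and> length xs = n}. (\<Prod>i<n. f (Suc i) (xs ! i)))"
    by (simp add: sum_distrib_left sum_distrib_right)
  also have "\<dots> = (\<Sum>a\<in>S. f 0 a) * (\<Prod>i<n. \<Sum>a\<in>S. f (Suc i) a)"
    using Suc.IH[of "\<lambda>i. f (Suc i)"] Suc.prems by simp
  also have "\<dots> = (\<Prod>i<Suc n. \<Sum>a\<in>S. f i a)"
    by (simp only: prod.lessThan_Suc_shift)
  finally show ?case .
qed

lemma lsum_prod_univ:
  fixes f :: "nat \<Rightarrow> 'a::finite \<Rightarrow> real"
  shows "(\<Sum>xs\<in>{xs::'a::finite list. length xs = n}. \<Prod>i<n. f i (xs!i))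
         = (\<Prod>i<n. \<Sum>a\<in>UNIV. f i a)"
  using lsum_prod[where S="UNIV::'a set" and n=n and f=f] by simp

lemma finite_len[simp]: "finite {xs::'a::finite list. length xs = n}"
  using finite_lists_length_eq[of "UNIV::'a set" n] by simp

lemma lsum_append:
  "(\<Sum>ys\<in>{ys::'a::finite list. length ys = n + k}. G ys)
   = (\<Sum>zs\<in>{zs. length zs = n}. \<Sum>ws\<in>{ws. length ws = k}. G (zs @ ws))"
proof -
  have inj: "inj_on (\<lambda>(zs, ws). zs @ ws) ({zs::'a list. length zs = n} \<times> {ws. length ws = k})"
    by (auto simp: inj_on_def)
  have im: "{ys::'a list. length ys = n + k} = (\<lambda>(zs, ws). zs @ ws) ` ({zs. length zs = n} \<times> {ws. length ws = k})"
  proof (safe)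
    fix ys :: "'a list" assume "length ys = n + k"
    then show "ys \<in> (\<lambda>(zs, ws). zs @ ws) ` ({zs. length zs = n} \<times> {ws. length ws = k})"
      by (intro image_eqI[of _ _ "(take n ys, drop n ys)"]) auto
  qed auto
  show ?thesis unfolding im by (subst sum.reindex[OF inj]) (simp add: sum.cartesian_product case_prod_beta)
qed

definition pout :: "(nat \<Rightarrow> 'y \<Rightarrow> real) \<Rightarrow> 'y list \<Rightarrow> real" where
  "pout q ys = (\<Prod>i<length ys. q i (ys!i))"

lemma prod_lessThan_add: "(\<Prod>i<n+(k::nat). f i) = (\<Prod>i<n. f i) * (\<Prod>j<k. f (n+j)::'a::comm_monoid_mult)"
  by (induction k arbitrary: n) (auto simp: mult.assoc)

lemma pout_append: "pout q (zs @ ws) = pout q zs * (\<Prod>j<length ws. q (length zs + j) (ws!j))"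
  unfolding pout_def
  by (simp add: prod_lessThan_add nth_append)



definition tau :: "('y list \<Rightarrow> bool) \<Rightarrow> 'y list \<Rightarrow> nat" where
  "tau stop ys = (LEAST k. stop (take k ys))"

context
  fixes stop :: "'y list \<Rightarrow> bool" and K :: nat
  assumes forced: "\<And>ys. length ys = K \<Longrightarrow> stop ys"
begin


lemma no_late_stop: "K < length zs \<Longrightarrow> \<not> first_stop stop zs"
  unfolding first_stop_def using forced[of "take K zs"] by auto

lemma tau_le: "length ys = K \<Longrightarrow> tau stop ys \<le> K"
  unfolding tau_def by (rule Least_le) (simp add: forced)

lemma tau_stop: "length ys = K \<Longrightarrow> stop (take (tau stop ys) ys)"
  unfolding tau_def by (rule LeastI[of _ K]) (simp add: forced)

lemma tau_min: "k < tau stop ys \<Longrightarrow> \<not> stop (take k ys)"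
  unfolding tau_def using not_less_Least by blast

lemma first_stop_take:
  assumes "length ys = K" "n \<le> K"
  shows "first_stop stop (take n ys) \<longleftrightarrow> n = tau stop ys"
proof
  assume fs: "first_stop stop (take n ys)"
  then have s: "stop (take n ys)" unfolding first_stop_def by simp
  have ns: "\<not> stop (take k ys)" if "k < n" for k
  proof -
    have "take k (take n ys) = take k ys" using that by (simp add: min_def)
    moreover have "k < length (take n ys)" using that assms by simp
    ultimately show ?thesis using fs unfolding first_stop_def by metis
  qed
  have "tau stop ys \<le> n" unfolding tau_def using s by (rule Least_le)
  moreover have "\<not> tau stop ys < n" using ns tau_stop[OF assms(1)] by blast
  ultimately show "n = tau stop ys" by simp
next
  assume "n = tau stop ys"
  then show "first_stop stop (take n ys)"
    using tau_stop[OF assms(1)] tau_min[of _ ys] unfolding first_stop_def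
    by (auto simp: min_def)
qed


end

locale chan =
  fixes q :: "nat \<Rightarrow> 'y::finite \<Rightarrow> real"
  assumes q_nn: "\<And>i y. 0 \<le> q i y" and q_sum: "\<And>i. (\<Sum>y\<in>UNIV. q i y) = 1"
begin

lemma pout_nn: "0 \<le> pout q ys"
  unfolding pout_def by (auto intro: prod_nonneg q_nn)

lemma tail_total: "(\<Sum>ws\<in>{ws::'y list. length ws = k}. \<Prod>j<k. q (n+j) (ws!j)) = 1"
  by (subst lsum_prod_univ) (simp add: q_sum)

lemma pout_total: "(\<Sum>ys\<in>{ys::'y list. length ys = k}. pout q ys) = 1"
  using tail_total[where k=k and n=0] unfolding pout_def by simp

lemma marg:
  assumes "n \<le> K"
  shows "(\<Sum>ys\<in>{ys::'y list. length ys = K}. pout q ys * G (take n ys))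
       = (\<Sum>zs\<in>{zs. length zs = n}. pout q zs * G zs)"
proof -
  obtain k where K: "K = n + k" using assms le_Suc_ex by blast
  have "(\<Sum>ys\<in>{ys::'y list. length ys = K}. pout q ys * G (take n ys))
     = (\<Sum>zs\<in>{zs::'y list. length zs = n}. \<Sum>ws\<in>{ws. length ws = k}. pout q (zs@ws) * G (take n (zs@ws)))"
    unfolding K by (rule lsum_append)
  also have "\<dots> = (\<Sum>zs\<in>{zs::'y list. length zs = n}. pout q zs * G zs * (\<Sum>ws\<in>{ws::'y list. length ws = k}. \<Prod>j<k. q (n+j) (ws!j)))"
    by (intro sum.cong refl) (auto simp: pout_append sum_distrib_left mult_ac)
  also have "\<dots> = (\<Sum>zs\<in>{zs. length zs = n}. pout q zs * G zs)"
    by (simp add: tail_total)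
  finally show ?thesis .
qed

context
  fixes stop :: "'y list \<Rightarrow> bool" and K :: nat
  assumes forced: "\<And>ys. length ys = K \<Longrightarrow> stop ys"
begin

lemma stop_sum:
  "(\<Sum>n\<le>K. \<Sum>zs\<in>{zs::'y list. length zs = n \<and> first_stop stop zs}. pout q zs * h zs)
   = (\<Sum>ys\<in>{ys::'y list. length ys = K}. pout q ys * h (take (tau stop ys) ys))"
proof -
  have e1: "\<And>n. (\<Sum>zs\<in>{zs::'y list. length zs = n \<and> first_stop stop zs}. pout q zs * h zs)
      = (\<Sum>zs\<in>{zs::'y list. length zs = n}. pout q zs * (if first_stop stop zs then h zs else 0))"
  proof -
    fix n
    have "{zs::'y list. length zs = n \<and> first_stop stop zs} = {zs \<in> {zs. length zs = n}. first_stop stop zs}"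
      by simp
    then show "?thesis n"
      by (simp only: sum.inter_filter[OF finite_len]) (simp add: if_distrib cong: if_cong)
  qed
  have e2: "\<And>n. n \<in> {..K} \<Longrightarrow> (\<Sum>zs\<in>{zs::'y list. length zs = n}. pout q zs * (if first_stop stop zs then h zs else 0))
     = (\<Sum>ys\<in>{ys::'y list. length ys = K}. pout q ys * (if first_stop stop (take n ys) then h (take n ys) else 0))"
    by (rule marg[symmetric]) simp
  have e3: "\<And>ys. ys \<in> {ys::'y list. length ys = K} \<Longrightarrow>
     (\<Sum>n\<le>K. pout q ys * (if first_stop stop (take n ys) then h (take n ys) else 0))
     = pout q ys * h (take (tau stop ys) ys)"
  proof -
    fix ys :: "'y list" assume "ys \<in> {ys. length ys = K}"
    then have L: "length ys = K" by simp
    have "(\<Sum>n\<le>K. pout q ys * (if first_stop stop (take n ys) then h (take n ys) else 0))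
        = (\<Sum>n\<le>K. pout q ys * (if n = tau stop ys then h (take n ys) else 0))"
      by (intro sum.cong refl) (simp add: first_stop_take[OF forced L])
    also have "\<dots> = pout q ys * h (take (tau stop ys) ys)"
      by (simp add: sum_distrib_left[symmetric] tau_le[OF forced L])
    finally show "?thesis ys" .
  qed
  have "(\<Sum>n\<le>K. \<Sum>zs\<in>{zs::'y list. length zs = n \<and> first_stop stop zs}. pout q zs * h zs)
      = (\<Sum>n\<le>K. \<Sum>ys\<in>{ys::'y list. length ys = K}. pout q ys * (if first_stop stop (take n ys) then h (take n ys) else 0))"
    using e1 e2 by simp
  also have "\<dots> = (\<Sum>ys\<in>{ys::'y list. length ys = K}. \<Sum>n\<le>K. pout q ys * (if first_stop stop (take n ys) then h (take n ys) else 0))"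
    by (rule sum.swap)
  also have "\<dots> = (\<Sum>ys\<in>{ys::'y list. length ys = K}. pout q ys * h (take (tau stop ys) ys))"
    by (rule sum.cong[OF refl e3])
  finally show ?thesis .
qed

end
end



lemma dmc_chan: "dmc Q \<Longrightarrow> chan (\<lambda>i y. Q (f i) y)"
  unfolding dmc_def chan_def by auto

lemma out_prob_pout: "out_prob Q c N star m l = pout (\<lambda>i y. Q (async_input c N star m l (Suc i)) y)"
  unfolding out_prob_def pout_def by (rule ext) simp

context chan begin

lemma set_filter_eq: "(\<Sum>zs\<in>{zs::'y list. length zs = n \<and> P zs}. g zs)
    = (\<Sum>zs\<in>{zs::'y list. length zs = n}. if P zs then g zs else 0)"
proof -
  have "{zs::'y list. length zs = n \<and> P zs} = {zs \<in> {zs. length zs = n}. P zs}" by simp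
  then show ?thesis by (simp only: sum.inter_filter[OF finite_len])
qed

lemma suminf_stop:
  fixes stop :: "'y list \<Rightarrow> bool"
  assumes forced: "\<And>ys. length ys = K \<Longrightarrow> stop ys"
  and hnn: "\<And>zs. 0 \<le> h zs"
  shows "(\<Sum>n. ennreal (\<Sum>zs\<in>{zs::'y list. length zs = n \<and> first_stop stop zs}. pout q zs * h zs))
     = ennreal (\<Sum>ys\<in>{ys::'y list. length ys = K}. pout q ys * h (take (tau stop ys) ys))"
proof -
  have z: "{zs::'y list. length zs = n \<and> first_stop stop zs} = {}" if "n \<notin> {..K}" for n
    using no_late_stop[where stop=stop and K=K, OF forced] that by auto
  have "(\<Sum>n. ennreal (\<Sum>zs\<in>{zs::'y list. length zs = n \<and> first_stop stop zs}. pout q zs * h zs))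
      = (\<Sum>n\<le>K. ennreal (\<Sum>zs\<in>{zs::'y list. length zs = n \<and> first_stop stop zs}. pout q zs * h zs))"
    by (rule suminf_finite) (auto simp: z)
  also have "\<dots> = ennreal (\<Sum>n\<le>K. \<Sum>zs\<in>{zs::'y list. length zs = n \<and> first_stop stop zs}. pout q zs * h zs)"
    by (rule sum_ennreal) (auto intro!: sum_nonneg mult_nonneg_nonneg pout_nn hnn)
  also have "\<dots> = ennreal (\<Sum>ys\<in>{ys::'y list. length ys = K}. pout q ys * h (take (tau stop ys) ys))"
    using stop_sum[OF forced] by simp
  finally show ?thesis .
qed

end

lemma err_prob_eq:
  fixes Q :: "'x::finite \<Rightarrow> 'y::finite \<Rightarrow> real"
  assumes "dmc Q" and forced: "\<And>ys. length ys = K \<Longrightarrow> stop ys"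
  shows "err_prob Q c N star stop dec m l = ennreal (\<Sum>ys\<in>{ys::'y list. length ys = K}.
     pout (\<lambda>i y. Q (async_input c N star m l (Suc i)) y) ys * (if dec (take (tau stop ys) ys) \<noteq> m then 1 else 0))"
proof -
  interpret chan "\<lambda>i y. Q (async_input c N star m l (Suc i)) y" using dmc_chan[OF assms(1)] .
  have "\<And>n. (\<Sum>ys\<in>{ys. length ys = n \<and> first_stop stop ys \<and> dec ys \<noteq> m}. out_prob Q c N star m l ys)
     = (\<Sum>zs\<in>{zs::'y list. length zs = n \<and> first_stop stop zs}. pout (\<lambda>i y. Q (async_input c N star m l (Suc i)) y) zs * (if dec zs \<noteq> m then 1 else 0))"
    unfolding out_prob_pout set_filter_eq by (intro sum.cong refl) auto
  then show ?thesis unfolding err_prob_def using suminf_stop[where stop=stop and K=K, OF forced, where h="\<lambda>zs. if dec zs \<noteq> m then 1 else 0"]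
    by simp
qed

lemma exp_delay_eq:
  fixes Q :: "'x::finite \<Rightarrow> 'y::finite \<Rightarrow> real"
  assumes "dmc Q" and forced: "\<And>ys. length ys = K \<Longrightarrow> stop ys"
  shows "exp_delay Q c N star stop m l = ennreal (\<Sum>ys\<in>{ys::'y list. length ys = K}.
     pout (\<lambda>i y. Q (async_input c N star m l (Suc i)) y) ys * real (tau stop ys - l))"
proof -
  interpret chan "\<lambda>i y. Q (async_input c N star m l (Suc i)) y" using dmc_chan[OF assms(1)] .
  have 1: "(\<Sum>n. ennreal (stop_prob Q c N star stop m l n * real (n - l)))
     = ennreal (\<Sum>ys\<in>{ys::'y list. length ys = K}.
     pout (\<lambda>i y. Q (async_input c N star m l (Suc i)) y) ys * real (length (take (tau stop ys) ys) - l))"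
    unfolding stop_prob_def out_prob_pout sum_distrib_right
    using suminf_stop[where stop=stop and K=K, OF forced, where h="\<lambda>zs. real (length zs - l)"] by simp
  have 2: "(\<Sum>n. ennreal (stop_prob Q c N star stop m l n)) = 1"
    unfolding stop_prob_def out_prob_pout
    using suminf_stop[where stop=stop and K=K, OF forced, where h="\<lambda>zs. 1"] pout_total by simp
  have 3: "length (take (tau stop ys) ys) = tau stop ys" if "length ys = K" for ys
    using tau_le[OF forced that] that by simp
  have 4: "(\<Sum>ys\<in>{ys::'y list. length ys = K}.
     pout (\<lambda>i y. Q (async_input c N star m l (Suc i)) y) ys * real (length (take (tau stop ys) ys) - l))
    = (\<Sum>ys\<in>{ys::'y list. length ys = K}.
     pout (\<lambda>i y. Q (async_input c N star m l (Suc i)) y) ys * real (tau stop ys - l))"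
    by (rule sum.cong[OF refl]) (simp only: 3 mem_Collect_eq)
  show ?thesis unfolding exp_delay_def 1 2 4 by simp
qed



lemma averaging:
  assumes "finite C" "\<And>c. c \<in> C \<Longrightarrow> 0 \<le> w c" "(\<Sum>c\<in>C. w c) = 1"
    "(\<Sum>c\<in>C. w c * F c) \<le> (\<delta>::real)"
  shows "\<exists>c\<in>C. F c \<le> \<delta>"
proof (rule ccontr)
  assume "\<not> ?thesis"
  then have gt: "\<And>c. c \<in> C \<Longrightarrow> \<delta> < F c" by force
  obtain c0 where c0: "c0 \<in> C" "0 < w c0"
  proof -
    have "\<exists>c\<in>C. w c \<noteq> 0" using assms(3) by (metis one_neq_zero sum.neutral)
    then obtain c where "c \<in> C" "w c \<noteq> 0" by blast
    moreover have "0 \<le> w c" using assms(2) \<open>c \<in> C\<close> by simp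
    ultimately show ?thesis using that by force
  qed
  have "0 < (\<Sum>c\<in>C. w c * (F c - \<delta>))"
    by (rule sum_pos2[OF assms(1) c0(1)]) (use c0 gt assms(2) in \<open>auto intro!: mult_nonneg_nonneg mult_pos_pos simp: less_imp_le\<close>)
  also have "\<dots> = (\<Sum>c\<in>C. w c * F c) - \<delta>"
    by (simp add: right_diff_distrib sum_subtractf sum_distrib_right[symmetric] assms(3))
  finally show False using assms(4) by simp
qed

lemma pair_avg:
  fixes p :: "'a \<Rightarrow> real"
  assumes S: "finite S" and p1: "(\<Sum>a\<in>S. p a) = 1"
    and m: "m < M" and m': "m' < M" and mm: "m \<noteq> m'"
  shows "(\<Sum>cws\<in>{cws. set cws \<subseteq> S \<and> length cws = M}. (\<Prod>i<M. p (cws!i)) * F (cws!m) (cws!m'))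
       = (\<Sum>a\<in>S. \<Sum>b\<in>S. p a * p b * F a b)"
proof -
  let ?C = "{cws. set cws \<subseteq> S \<and> length cws = M}"
  let ?f = "\<lambda>a b i z. p z * (if i = m then (if z = a then 1 else 0) else 1) * (if i = m' then (if z = b then 1 else 0) else 1)"
  have exp: "F (cws!m) (cws!m') = (\<Sum>a\<in>S. \<Sum>b\<in>S. (if cws!m = a \<and> cws!m' = b then F a b else 0))"
    if "cws \<in> ?C" for cws
  proof -
    have "cws!m \<in> S" "cws!m' \<in> S" using that m m' by (auto simp: subset_iff)
    then have "(\<Sum>a\<in>S. \<Sum>b\<in>S. (if cws!m = a \<and> cws!m' = b then F a b else 0))
       = (\<Sum>a\<in>S. if cws!m = a then (\<Sum>b\<in>S. if cws!m' = b then F a b else 0) else 0)"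
      by (intro sum.cong refl) auto
    also have "\<dots> = (\<Sum>a\<in>S. if cws!m = a then F a (cws!m') else 0)"
      using S \<open>cws!m' \<in> S\<close> by (intro sum.cong refl) (simp add: sum.delta)
    also have "\<dots> = F (cws!m) (cws!m')"
      using S \<open>cws!m \<in> S\<close> by (simp add: sum.delta)
    finally show ?thesis by simp
  qed
  have prodeq: "(\<Prod>i<M. ?f a b i (cws!i)) = (\<Prod>i<M. p (cws!i)) * (if cws!m = a \<and> cws!m' = b then 1 else 0)"
    for a b cws
  proof -
    have "(\<Prod>i<M. ?f a b i (cws!i)) = (\<Prod>i<M. p (cws!i)) * (\<Prod>i<M. (if i = m then (if cws!i = a then 1 else 0) else 1))
        * (\<Prod>i<M. (if i = m' then (if cws!i = b then 1 else 0) else 1))"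
      by (simp add: prod.distrib)
    also have "\<dots> = (\<Prod>i<M. p (cws!i)) * (if cws!m = a then 1 else 0) * (if cws!m' = b then 1 else 0)"
      using m m' by (simp only: prod.delta[OF finite_lessThan]) simp
    finally show ?thesis by simp
  qed
  have inner: "(\<Sum>cws\<in>?C. (\<Prod>i<M. p (cws!i)) * (if cws!m = a \<and> cws!m' = b then 1 else 0)) = p a * p b"
    if "a \<in> S" "b \<in> S" for a b
  proof -
    have "(\<Sum>cws\<in>?C. (\<Prod>i<M. p (cws!i)) * (if cws!m = a \<and> cws!m' = b then 1 else 0))
        = (\<Prod>i<M. \<Sum>z\<in>S. ?f a b i z)"
      unfolding prodeq[symmetric] by (rule lsum_prod[OF S])
    also have "\<dots> = (\<Prod>i<M. if i = m then p a else if i = m' then p b else 1)"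
    proof (rule prod.cong[OF refl])
      fix i assume "i \<in> {..<M}"
      show "(\<Sum>z\<in>S. ?f a b i z) = (if i = m then p a else if i = m' then p b else 1)"
      proof (cases "i = m")
        case True
        then have "\<And>z. ?f a b i z = (if z = a then p z else 0)" using mm by simp
        then show ?thesis using True S that by (simp only: sum.delta) simp
      next
        case False
        show ?thesis
        proof (cases "i = m'")
          case True
          then have "\<And>z. ?f a b i z = (if z = b then p z else 0)" using False by simp
          then show ?thesis using True False S that by (simp only: sum.delta) simp
        next
          case F2: False
          then have "\<And>z. ?f a b i z = p z" using False by simp
          then show ?thesis using F2 False p1 by simp
        qed
      qed
    qed
    also have "\<dots> = p a * p b"
    proof -
      have "(\<Prod>i<M. if i = m then p a else if i = m' then p b else 1)
          = (\<Prod>i<M. (if i = m then p a else 1) * (if i = m' then p b else 1))"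
        by (rule prod.cong) (use mm in auto)
      also have "\<dots> = p a * p b" using m m' by (simp only: prod.distrib prod.delta[OF finite_lessThan]) simp
      finally show ?thesis .
    qed
    finally show ?thesis .
  qed
  have "(\<Sum>cws\<in>?C. (\<Prod>i<M. p (cws!i)) * F (cws!m) (cws!m'))
      = (\<Sum>cws\<in>?C. \<Sum>a\<in>S. \<Sum>b\<in>S. F a b * ((\<Prod>i<M. p (cws!i)) * (if cws!m = a \<and> cws!m' = b then 1 else 0)))"
  proof (rule sum.cong[OF refl])
    fix cws assume c: "cws \<in> ?C"
    show "(\<Prod>i<M. p (cws!i)) * F (cws!m) (cws!m') = (\<Sum>a\<in>S. \<Sum>b\<in>S. F a b * ((\<Prod>i<M. p (cws!i)) * (if cws!m = a \<and> cws!m' = b then 1 else 0)))"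
      unfolding exp[OF c] sum_distrib_left by (intro sum.cong refl) simp
  qed
  also have "\<dots> = (\<Sum>a\<in>S. \<Sum>cws\<in>?C. \<Sum>b\<in>S. F a b * ((\<Prod>i<M. p (cws!i)) * (if cws!m = a \<and> cws!m' = b then 1 else 0)))"
    by (rule sum.swap)
  also have "\<dots> = (\<Sum>a\<in>S. \<Sum>b\<in>S. \<Sum>cws\<in>?C. F a b * ((\<Prod>i<M. p (cws!i)) * (if cws!m = a \<and> cws!m' = b then 1 else 0)))"
    by (intro sum.cong refl sum.swap)
  also have "\<dots> = (\<Sum>a\<in>S. \<Sum>b\<in>S. F a b * (\<Sum>cws\<in>?C. (\<Prod>i<M. p (cws!i)) * (if cws!m = a \<and> cws!m' = b then 1 else 0)))"
    by (simp only: sum_distrib_left)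
  also have "\<dots> = (\<Sum>a\<in>S. \<Sum>b\<in>S. p a * p b * F a b)"
    by (intro sum.cong refl) (simp add: inner)
  finally show ?thesis .
qed



definition PYd :: "('x::finite \<Rightarrow> real) \<Rightarrow> ('x \<Rightarrow> 'y \<Rightarrow> real) \<Rightarrow> 'y \<Rightarrow> real" where
  "PYd P Q b = (\<Sum>a\<in>UNIV. P a * Q a b)"
definition rr :: "('x::finite \<Rightarrow> real) \<Rightarrow> ('x \<Rightarrow> 'y \<Rightarrow> real) \<Rightarrow> 'x \<Rightarrow> 'y \<Rightarrow> real" where
  "rr P Q a b = Q a b / PYd P Q b"
definition Pn :: "('x \<Rightarrow> real) \<Rightarrow> 'x list \<Rightarrow> real" where
  "Pn P x = (\<Prod>k<length x. P (x!k))"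
definition matchN :: "('x::finite \<Rightarrow> real) \<Rightarrow> ('x \<Rightarrow> 'y \<Rightarrow> real) \<Rightarrow> nat \<Rightarrow> real \<Rightarrow> 'x list \<Rightarrow> 'y list \<Rightarrow> bool" where
  "matchN P Q N thr x w \<longleftrightarrow> thr \<le> (\<Prod>k<N. rr P Q (x!k) (w!k))"
definition inp :: "'x list \<Rightarrow> nat \<Rightarrow> 'x \<Rightarrow> nat \<Rightarrow> nat \<Rightarrow> 'x" where
  "inp x N star l i = (if l \<le> i \<and> i < l + N then x!(i-l) else star)"
definition psi :: "('x::finite \<Rightarrow> real) \<Rightarrow> ('x \<Rightarrow> 'y \<Rightarrow> real) \<Rightarrow> real \<Rightarrow> real \<Rightarrow> 'x \<Rightarrow> 'y \<Rightarrow> real" where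
  "psi P Q T s a y = exp (s * (T - ln (rr P Q a y)))"
definition Gf :: "('x::finite \<Rightarrow> real) \<Rightarrow> ('x \<Rightarrow> 'y::finite \<Rightarrow> real) \<Rightarrow> real \<Rightarrow> real \<Rightarrow> real" where
  "Gf P Q T s = (\<Sum>a\<in>UNIV. \<Sum>y\<in>UNIV. P a * Q a y * psi P Q T s a y)"

lemma prod_window:
  fixes f :: "nat \<Rightarrow> real"
  assumes "j0 + N \<le> K"
  shows "(\<Prod>i<K. if j0 \<le> i \<and> i < j0 + N then f i else 1) = (\<Prod>k<N. f (j0 + k))"
proof -
  obtain t where K: "K = j0 + (N + t)" using assms by (metis add.assoc le_Suc_ex)
  have "(\<Prod>i<K. if j0 \<le> i \<and> i < j0 + N then f i else 1)
     = (\<Prod>i<j0. if j0 \<le> i \<and> i < j0 + N then f i else 1) * (\<Prod>j<N+t. if j0 \<le> j0+j \<and> j0+j < j0 + N then f (j0+j) else 1)"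
    unfolding K by (rule prod_lessThan_add)
  also have "\<dots> = (\<Prod>j<N+t. if j < N then f (j0+j) else 1)" by simp
  also have "\<dots> = (\<Prod>j<N. if j < N then f (j0+j) else 1) * (\<Prod>u<t. if N + u < N then f (j0+(N+u)) else 1)"
    by (rule prod_lessThan_add)
  also have "\<dots> = (\<Prod>k<N. f (j0 + k))" by simp
  finally show ?thesis .
qed

locale cset =
  fixes P :: "'x::finite \<Rightarrow> real" and Q :: "'x \<Rightarrow> 'y::finite \<Rightarrow> real"
  assumes P_nn: "\<And>a. 0 \<le> P a" and P_sum: "(\<Sum>a\<in>UNIV. P a) = 1" and dmcQ: "dmc Q"
begin

lemma Q_nn: "0 \<le> Q a y" using dmcQ unfolding dmc_def by auto
lemma Q_sum: "(\<Sum>y\<in>UNIV. Q a y) = 1" using dmcQ unfolding dmc_def by auto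

lemma PY_nn: "0 \<le> PYd P Q b" unfolding PYd_def by (auto intro!: sum_nonneg mult_nonneg_nonneg P_nn Q_nn)
lemma rr_nn: "0 \<le> rr P Q a b" unfolding rr_def by (simp add: PY_nn Q_nn)

lemma PY_ge: "P a * Q a b \<le> PYd P Q b"
  unfolding PYd_def by (rule member_le_sum) (auto intro!: mult_nonneg_nonneg P_nn Q_nn)

lemma rr_pos: "0 < P a \<Longrightarrow> 0 < Q a b \<Longrightarrow> 0 < rr P Q a b"
  unfolding rr_def using PY_ge[of a b] by (intro divide_pos_pos) (auto intro: order_less_le_trans[OF mult_pos_pos])

lemma Pn_nn: "0 \<le> Pn P x" unfolding Pn_def by (auto intro!: prod_nonneg P_nn)

lemma Pn_sum: "(\<Sum>x\<in>{x::'x list. length x = N}. Pn P x) = 1"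
proof -
  have "(\<Sum>x\<in>{x::'x list. length x = N}. Pn P x) = (\<Sum>x\<in>{x::'x list. length x = N}. \<Prod>k<N. P (x!k))"
    unfolding Pn_def by (intro sum.cong refl) simp
  also have "\<dots> = 1" by (subst lsum_prod_univ[where f="\<lambda>i a. P a"]) (simp add: P_sum)
  finally show ?thesis .
qed

lemma false_alarm:
  assumes w: "length w = N" and thr: "0 < thr"
  shows "(\<Sum>x\<in>{x::'x list. length x = N}. Pn P x * (if matchN P Q N thr x w then 1 else 0)) \<le> 1 / thr"
proof -
  have "(\<Sum>x\<in>{x::'x list. length x = N}. Pn P x * (if matchN P Q N thr x w then 1 else 0))
     \<le> (\<Sum>x\<in>{x::'x list. length x = N}. Pn P x * ((\<Prod>k<N. rr P Q (x!k) (w!k)) / thr))"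
  proof (rule sum_mono)
    fix x :: "'x list"
    have "(if matchN P Q N thr x w then 1 else 0) \<le> (\<Prod>k<N. rr P Q (x!k) (w!k)) / thr"
      using thr by (auto simp: matchN_def prod_nonneg rr_nn)
    then show "Pn P x * (if matchN P Q N thr x w then 1 else 0) \<le> Pn P x * ((\<Prod>k<N. rr P Q (x!k) (w!k)) / thr)"
      by (rule mult_left_mono) (rule Pn_nn)
  qed
  also have "\<dots> = (\<Sum>x\<in>{x::'x list. length x = N}. \<Prod>k<N. P (x!k) * rr P Q (x!k) (w!k)) / thr"
    unfolding Pn_def sum_divide_distrib by (intro sum.cong refl) (simp add: prod.distrib)
  also have "\<dots> = (\<Prod>k<N. \<Sum>a\<in>UNIV. P a * rr P Q a (w!k)) / thr"
    by (subst lsum_prod_univ[where f="\<lambda>k a. P a * rr P Q a (w!k)"]) simp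
  also have "\<dots> \<le> 1 / thr"
  proof -
    have "(\<Prod>k<N. \<Sum>a\<in>UNIV. P a * rr P Q a (w!k)) \<le> 1"
    proof (rule prod_le_1)
      fix k
      have eq: "(\<Sum>a\<in>UNIV. P a * rr P Q a (w!k)) = PYd P Q (w!k) / PYd P Q (w!k)"
        unfolding rr_def PYd_def by (simp add: sum_divide_distrib[symmetric])
      show "0 \<le> (\<Sum>a\<in>UNIV. P a * rr P Q a (w!k)) \<and> (\<Sum>a\<in>UNIV. P a * rr P Q a (w!k)) \<le> 1"
        unfolding eq by (simp add: PY_nn)
    qed
    then show ?thesis using thr by (simp add: divide_right_mono)
  qed
  finally show ?thesis .
qed

end



context cset begin

definition H :: "real \<Rightarrow> real \<Rightarrow> 'x \<Rightarrow> real" where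
  "H T s a = (\<Sum>y\<in>UNIV. Q a y * psi P Q T s a y)"

lemma inp_win: "inp x N star (Suc j0) (Suc (j0 + k)) = x!k" if "k < N"
  using that unfolding inp_def by simp

lemma miss_pointwise:
  assumes x: "length x = N" and ys: "length ys = K" and win: "j0 + N \<le> K"
    and Ppos: "\<And>k. k < N \<Longrightarrow> 0 < P (x!k)"
    and pp: "0 < pout (\<lambda>i y. Q (inp x N star (Suc j0) (Suc i)) y) ys"
    and s: "0 \<le> s"
  shows "(if matchN P Q N (exp (real N * T)) x (take N (drop j0 ys)) then 0 else 1)
         \<le> (\<Prod>k<N. psi P Q T s (x!k) (ys!(j0+k)))"
proof -
  have Qpos: "0 < Q (x!k) (ys!(j0+k))" if "k < N" for k
  proof -
    have "j0 + k \<in> {..<length ys}" using that win ys by simp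
    moreover have "pout (\<lambda>i y. Q (inp x N star (Suc j0) (Suc i)) y) ys \<noteq> 0" using pp by simp
    ultimately have "Q (inp x N star (Suc j0) (Suc (j0+k))) (ys!(j0+k)) \<noteq> 0"
      unfolding pout_def by (metis (no_types, lifting) prod_zero_iff finite_lessThan)
    then show ?thesis using inp_win[OF that, of x star j0] Q_nn[of "x!k" "ys!(j0+k)"] by simp
  qed
  have rpos: "0 < rr P Q (x!k) (ys!(j0+k))" if "k < N" for k
    using rr_pos[OF Ppos[OF that] Qpos[OF that]] .
  have wk: "take N (drop j0 ys) ! k = ys!(j0+k)" if "k < N" for k
    using that win ys by simp
  have psi_pos: "0 \<le> (\<Prod>k<N. psi P Q T s (x!k) (ys!(j0+k)))"
    unfolding psi_def by (auto intro: prod_nonneg)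
  show ?thesis
  proof (cases "matchN P Q N (exp (real N * T)) x (take N (drop j0 ys))")
    case True then show ?thesis using psi_pos by simp
  next
    case False
    have "(\<Prod>k<N. rr P Q (x!k) (take N (drop j0 ys) ! k)) = (\<Prod>k<N. rr P Q (x!k) (ys!(j0+k)))"
      by (rule prod.cong) (simp_all only: wk lessThan_iff)
    then have lt: "(\<Prod>k<N. rr P Q (x!k) (ys!(j0+k))) < exp (real N * T)"
      using False unfolding matchN_def by (simp add: not_le)
    have ppos: "0 < (\<Prod>k<N. rr P Q (x!k) (ys!(j0+k)))" by (rule prod_pos) (simp add: rpos)
    have "(\<Sum>k<N. ln (rr P Q (x!k) (ys!(j0+k)))) = ln (\<Prod>k<N. rr P Q (x!k) (ys!(j0+k)))"
      by (rule ln_prod[symmetric]) (use rpos in force)+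
    also have "\<dots> < real N * T" using ln_less_cancel_iff[OF ppos, of "exp (real N * T)"] lt by simp
    finally have sl: "(\<Sum>k<N. ln (rr P Q (x!k) (ys!(j0+k)))) < real N * T" .
    have "(\<Prod>k<N. psi P Q T s (x!k) (ys!(j0+k))) = exp (\<Sum>k<N. s * (T - ln (rr P Q (x!k) (ys!(j0+k)))))"
      unfolding psi_def by (simp add: exp_sum)
    also have "(\<Sum>k<N. s * (T - ln (rr P Q (x!k) (ys!(j0+k))))) = s * (real N * T - (\<Sum>k<N. ln (rr P Q (x!k) (ys!(j0+k)))))"
      by (simp add: sum_distrib_left[symmetric] sum_subtractf)
    finally have "(\<Prod>k<N. psi P Q T s (x!k) (ys!(j0+k))) = exp (s * (real N * T - (\<Sum>k<N. ln (rr P Q (x!k) (ys!(j0+k))))))" .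
    moreover have "0 \<le> s * (real N * T - (\<Sum>k<N. ln (rr P Q (x!k) (ys!(j0+k)))))"
      using s sl by simp
    ultimately show ?thesis using False by simp
  qed
qed

lemma miss_factor:
  assumes x: "length x = N" and win: "j0 + N \<le> K"
  shows "(\<Sum>ys\<in>{ys::'y list. length ys = K}. pout (\<lambda>i y. Q (inp x N star (Suc j0) (Suc i)) y) ys
           * (\<Prod>k<N. psi P Q T s (x!k) (ys!(j0+k))))
       = (\<Prod>k<N. H T s (x!k))"
proof -
  define g where "g i y = Q (inp x N star (Suc j0) (Suc i)) y * (if j0 \<le> i \<and> i < j0 + N then psi P Q T s (x!(i-j0)) y else 1)" for i y
  have 1: "pout (\<lambda>i y. Q (inp x N star (Suc j0) (Suc i)) y) ys * (\<Prod>k<N. psi P Q T s (x!k) (ys!(j0+k)))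
      = (\<Prod>i<K. g i (ys!i))" if "length ys = K" for ys
  proof -
    have "(\<Prod>k<N. psi P Q T s (x!k) (ys!(j0+k))) = (\<Prod>i<K. if j0 \<le> i \<and> i < j0 + N then psi P Q T s (x!(i-j0)) (ys!i) else 1)"
      using prod_window[OF win, of "\<lambda>i. psi P Q T s (x!(i-j0)) (ys!i)"] by simp
    then show ?thesis unfolding g_def pout_def prod.distrib using that
      by (simp add: if_distrib cong: if_cong)
  qed
  have 2: "(\<Sum>y\<in>UNIV. g i y) = (if j0 \<le> i \<and> i < j0 + N then H T s (x!(i-j0)) else 1)" for i
  proof (cases "j0 \<le> i \<and> i < j0 + N")
    case True
    then have "inp x N star (Suc j0) (Suc i) = x!(i-j0)" unfolding inp_def by auto
    then show ?thesis using True unfolding g_def H_def by simp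
  next
    case False
    then have "inp x N star (Suc j0) (Suc i) = star" unfolding inp_def by auto
    then have "g i y = Q star y" for y using False unfolding g_def by auto
    then show ?thesis using False by (auto simp: Q_sum)
  qed
  have "(\<Sum>ys\<in>{ys::'y list. length ys = K}. pout (\<lambda>i y. Q (inp x N star (Suc j0) (Suc i)) y) ys
           * (\<Prod>k<N. psi P Q T s (x!k) (ys!(j0+k))))
      = (\<Sum>ys\<in>{ys::'y list. length ys = K}. \<Prod>i<K. g i (ys!i))"
    by (intro sum.cong refl) (simp add: 1)
  also have "\<dots> = (\<Prod>i<K. \<Sum>y\<in>UNIV. g i y)" by (rule lsum_prod_univ)
  also have "\<dots> = (\<Prod>i<K. if j0 \<le> i \<and> i < j0 + N then H T s (x!(i-j0)) else 1)"
    by (simp add: 2)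
  also have "\<dots> = (\<Prod>k<N. H T s (x!k))"
    using prod_window[OF win, of "\<lambda>i. H T s (x!(i-j0))"] by simp
  finally show ?thesis .
qed

lemma psi_nn: "0 \<le> psi P Q T s a y" unfolding psi_def by simp

lemma miss_bound:
  assumes win: "j0 + N \<le> K" and s: "0 \<le> s"
  shows "(\<Sum>x\<in>{x::'x list. length x = N}. Pn P x *
     (\<Sum>ys\<in>{ys::'y list. length ys = K}. pout (\<lambda>i y. Q (inp x N star (Suc j0) (Suc i)) y) ys
        * (if matchN P Q N (exp (real N * T)) x (take N (drop j0 ys)) then 0 else 1)))
     \<le> Gf P Q T s ^ N"
proof -
  have step: "Pn P x * (\<Sum>ys\<in>{ys::'y list. length ys = K}. pout (\<lambda>i y. Q (inp x N star (Suc j0) (Suc i)) y) ys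
        * (if matchN P Q N (exp (real N * T)) x (take N (drop j0 ys)) then 0 else 1))
     \<le> Pn P x * (\<Prod>k<N. H T s (x!k))" if x: "x \<in> {x::'x list. length x = N}" for x
  proof (cases "Pn P x = 0")
    case True then show ?thesis by simp
  next
    case False
    have Ppos: "0 < P (x!k)" if "k < N" for k
    proof -
      have "P (x!k) \<noteq> 0" using False x that unfolding Pn_def by auto
      then show ?thesis using P_nn[of "x!k"] by simp
    qed
    have "(\<Sum>ys\<in>{ys::'y list. length ys = K}. pout (\<lambda>i y. Q (inp x N star (Suc j0) (Suc i)) y) ys
        * (if matchN P Q N (exp (real N * T)) x (take N (drop j0 ys)) then 0 else 1))
      \<le> (\<Sum>ys\<in>{ys::'y list. length ys = K}. pout (\<lambda>i y. Q (inp x N star (Suc j0) (Suc i)) y) ys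
           * (\<Prod>k<N. psi P Q T s (x!k) (ys!(j0+k))))"
    proof (rule sum_mono)
      fix ys assume ys: "ys \<in> {ys::'y list. length ys = K}"
      interpret chan "\<lambda>i y. Q (inp x N star (Suc j0) (Suc i)) y" by (rule dmc_chan[OF dmcQ])
      show "pout (\<lambda>i y. Q (inp x N star (Suc j0) (Suc i)) y) ys
        * (if matchN P Q N (exp (real N * T)) x (take N (drop j0 ys)) then 0 else 1)
        \<le> pout (\<lambda>i y. Q (inp x N star (Suc j0) (Suc i)) y) ys * (\<Prod>k<N. psi P Q T s (x!k) (ys!(j0+k)))"
      proof (cases "pout (\<lambda>i y. Q (inp x N star (Suc j0) (Suc i)) y) ys = 0")
        case True then show ?thesis by simp
      next
        case False
        then have "0 < pout (\<lambda>i y. Q (inp x N star (Suc j0) (Suc i)) y) ys" using pout_nn[of ys]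
          by simp
        then show ?thesis using miss_pointwise[of x N ys K j0 star s T] x ys win Ppos s pout_nn[of ys]
          by (intro mult_left_mono) auto
      qed
    qed
    also have "\<dots> = (\<Prod>k<N. H T s (x!k))" using miss_factor x win by simp
    finally show ?thesis by (rule mult_left_mono) (rule Pn_nn)
  qed
  have "(\<Sum>x\<in>{x::'x list. length x = N}. Pn P x * (\<Prod>k<N. H T s (x!k)))
      = (\<Sum>x\<in>{x::'x list. length x = N}. \<Prod>k<N. P (x!k) * H T s (x!k))"
    unfolding Pn_def by (intro sum.cong refl) (simp add: prod.distrib)
  also have "\<dots> = (\<Prod>k<N. \<Sum>a\<in>UNIV. P a * H T s a)"
    by (subst lsum_prod_univ[where f="\<lambda>k a. P a * H T s a"]) simp
  also have "\<dots> = Gf P Q T s ^ N"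
    unfolding Gf_def H_def by (simp add: sum_distrib_left mult_ac)
  finally have eq: "(\<Sum>x\<in>{x::'x list. length x = N}. Pn P x * (\<Prod>k<N. H T s (x!k))) = Gf P Q T s ^ N" .
  have "(\<Sum>x\<in>{x::'x list. length x = N}. Pn P x *
     (\<Sum>ys\<in>{ys::'y list. length ys = K}. pout (\<lambda>i y. Q (inp x N star (Suc j0) (Suc i)) y) ys
        * (if matchN P Q N (exp (real N * T)) x (take N (drop j0 ys)) then 0 else 1)))
     \<le> (\<Sum>x\<in>{x::'x list. length x = N}. Pn P x * (\<Prod>k<N. H T s (x!k)))"
    by (rule sum_mono) (rule step)
  then show ?thesis using eq by simp
qed

end


context cset begin

lemma PQ_sum: "(\<Sum>a\<in>UNIV. \<Sum>y\<in>UNIV. P a * Q a y) = 1"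
  by (simp add: sum_distrib_left[symmetric] Q_sum P_sum)

lemma Gf0: "Gf P Q T 0 = 1"
  unfolding Gf_def psi_def by (simp add: PQ_sum)

lemma MI_eq: "mutual_info P Q = (\<Sum>a\<in>UNIV. \<Sum>y\<in>UNIV. P a * Q a y * ln (rr P Q a y))"
  unfolding mutual_info_def rr_def PYd_def by (intro sum.cong refl) auto

lemma Gf_deriv: "DERIV (Gf P Q T) 0 :> (T - mutual_info P Q)"
proof -
  have d: "DERIV (\<lambda>s. \<Sum>a\<in>UNIV. \<Sum>y\<in>UNIV. P a * Q a y * exp (s * (T - ln (rr P Q a y)))) 0 :>
      (\<Sum>a\<in>UNIV. \<Sum>y\<in>UNIV. P a * Q a y * (T - ln (rr P Q a y)))"
    apply (rule DERIV_cong)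
     apply (rule derivative_eq_intros | simp)+
    apply (simp add: mult_ac)
    done
  have e: "(\<Sum>a\<in>UNIV. \<Sum>y\<in>UNIV. P a * Q a y * (T - ln (rr P Q a y))) = T - mutual_info P Q"
    unfolding MI_eq using PQ_sum
    by (simp add: right_diff_distrib sum_subtractf sum_distrib_right[symmetric])
  have f: "Gf P Q T = (\<lambda>s. \<Sum>a\<in>UNIV. \<Sum>y\<in>UNIV. P a * Q a y * exp (s * (T - ln (rr P Q a y))))"
    unfolding Gf_def psi_def by (rule ext) simp
  show ?thesis using d unfolding e f .
qed

lemma Gf_lt1:
  assumes "T < mutual_info P Q"
  shows "\<exists>s>0. Gf P Q T s < 1"
proof -
  obtain d where "d > 0" "\<And>h. h > 0 \<Longrightarrow> h < d \<Longrightarrow> Gf P Q T (0 + h) < Gf P Q T 0"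
    using DERIV_neg_dec_right[OF Gf_deriv] assms by force
  then show ?thesis using Gf0[of T] by (intro exI[of _ "d/2"]) auto
qed

lemma Gf_nn: "0 \<le> Gf P Q T s"
  unfolding Gf_def by (auto intro!: sum_nonneg mult_nonneg_nonneg P_nn Q_nn psi_nn)

end


context cset begin

definition mt :: "nat \<Rightarrow> real \<Rightarrow> 'x list list \<Rightarrow> 'y list \<Rightarrow> nat \<Rightarrow> bool" where
  "mt N thr cws zs m' \<longleftrightarrow> N \<le> length zs \<and> matchN P Q N thr (cws!m') (drop (length zs - N) zs)"

definition stopr :: "nat \<Rightarrow> nat \<Rightarrow> nat \<Rightarrow> real \<Rightarrow> 'x list list \<Rightarrow> 'y list \<Rightarrow> bool" where
  "stopr K M N thr cws zs \<longleftrightarrow> K \<le> length zs \<or> (\<exists>m'<M. mt N thr cws zs m')"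

definition decr :: "nat \<Rightarrow> nat \<Rightarrow> real \<Rightarrow> 'x list list \<Rightarrow> 'y list \<Rightarrow> nat" where
  "decr M N thr cws zs = (if \<exists>m'<M. mt N thr cws zs m' then LEAST m'. m' < M \<and> mt N thr cws zs m' else 0)"

lemma mt_take:
  assumes "length ys = K" "N \<le> n" "n \<le> K"
  shows "mt N thr cws (take n ys) m' \<longleftrightarrow> matchN P Q N thr (cws!m') (take N (drop (n - N) ys))"
proof -
  have "drop (n - N) (take n ys) = take N (drop (n - N) ys)"
    using assms by (simp add: drop_take)
  then show ?thesis using assms unfolding mt_def by simp
qed

context
  fixes K M N A :: nat and thr :: real and cws :: "'x list list" and m l :: nat and ys :: "'y list"
  assumes K: "K = A + N - 1" and N1: "1 \<le> N" and m: "m < M" and l: "1 \<le> l" "l \<le> A"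
    and ys: "length ys = K"
begin

abbreviation "stp \<equiv> stopr K M N thr cws"

lemma forced_stp: "length zs = K \<Longrightarrow> stp zs"
  unfolding stopr_def by simp

lemma tau_leK: "tau stp ys \<le> K"
  using tau_le[OF forced_stp ys] .

lemma hit:
  assumes "matchN P Q N thr (cws!m) (take N (drop (l-1) ys))"
  shows "tau stp ys \<le> l + N - 1"
proof -
  have le: "l + N - 1 \<le> K" "N \<le> l + N - 1" using K l N1 by auto
  have "l + N - 1 - N = l - 1" using l by simp
  then have "mt N thr cws (take (l + N - 1) ys) m" using mt_take[OF ys le(2) le(1)] assms by simp
  then have "stp (take (l + N - 1) ys)" unfolding stopr_def using m by blast
  then show ?thesis unfolding tau_def by (rule Least_le)
qed

lemma dec_ok:
  assumes hitm: "matchN P Q N thr (cws!m) (take N (drop (l-1) ys))"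
    and nofa: "\<And>n m'. N \<le> n \<Longrightarrow> n \<le> K \<Longrightarrow> m' < M \<Longrightarrow> m' \<noteq> m \<Longrightarrow>
                 \<not> matchN P Q N thr (cws!m') (take N (drop (n - N) ys))"
  shows "decr M N thr cws (take (tau stp ys) ys) = m"
proof -
  let ?t = "tau stp ys"
  have t1: "?t \<le> l + N - 1" using hit[OF hitm] .
  have le: "l + N - 1 \<le> K" using K l by auto
  have st: "stp (take ?t ys)" using tau_stop[OF forced_stp ys] .
  show ?thesis
  proof (cases "\<exists>m'<M. mt N thr cws (take ?t ys) m'")
    case True
    have only: "m' = m" if "m' < M" "mt N thr cws (take ?t ys) m'" for m'
    proof (rule ccontr)
      assume "m' \<noteq> m"
      have "N \<le> length (take ?t ys)" using that(2) unfolding mt_def by simp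
      then have Nt: "N \<le> ?t" by simp
      have "matchN P Q N thr (cws!m') (take N (drop (?t - N) ys))"
        using mt_take[OF ys Nt tau_leK] that(2) by simp
      then show False using nofa[OF Nt tau_leK that(1) \<open>m' \<noteq> m\<close>] by simp
    qed
    obtain m0 where m0: "m0 < M" "mt N thr cws (take ?t ys) m0" using True by blast
    then have "m0 = m" by (rule only)
    then have mm: "mt N thr cws (take ?t ys) m" using m0 by simp
    have "(LEAST m'. m' < M \<and> mt N thr cws (take ?t ys) m') = m"
    proof (rule Least_equality)
      show "m < M \<and> mt N thr cws (take ?t ys) m" using m mm by simp
      fix y assume "y < M \<and> mt N thr cws (take ?t ys) y"
      then have "y = m" using only by simp
      then show "m \<le> y" by simp
    qed
    then show ?thesis unfolding decr_def using True by simp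
  next
    case False
    then have "K \<le> length (take ?t ys)" using st unfolding stopr_def by blast
    then have "K \<le> ?t" by simp
    then have teq: "?t = l + N - 1" using t1 le by simp
    have eqn: "l + N - 1 - N = l - 1" using l by simp
    have le2: "N \<le> l + N - 1" using l by simp
    have "mt N thr cws (take ?t ys) m"
      unfolding teq using mt_take[OF ys le2 le] hitm eqn by simp
    then show ?thesis using False m by blast
  qed
qed

lemma err_ind:
  "(if decr M N thr cws (take (tau stp ys) ys) \<noteq> m then 1 else 0 :: real)
   \<le> (if matchN P Q N thr (cws!m) (take N (drop (l-1) ys)) then 0 else 1)
     + (\<Sum>n\<in>{N..K}. \<Sum>m'\<in>{..<M} - {m}. if matchN P Q N thr (cws!m') (take N (drop (n - N) ys)) then 1 else 0)"
proof -
  have nn: "0 \<le> (\<Sum>n\<in>{N..K}. \<Sum>m'\<in>{..<M} - {m}. if matchN P Q N thr (cws!m') (take N (drop (n - N) ys)) then 1 else (0::real))"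
    by (intro sum_nonneg) simp
  show ?thesis
proof (cases "decr M N thr cws (take (tau stp ys) ys) \<noteq> m")
  case True
  show ?thesis
  proof (cases "matchN P Q N thr (cws!m) (take N (drop (l-1) ys))")
    case hm: True
    have "\<exists>n m'. N \<le> n \<and> n \<le> K \<and> m' < M \<and> m' \<noteq> m \<and> matchN P Q N thr (cws!m') (take N (drop (n - N) ys))"
    proof (rule ccontr)
      assume na: "\<not> ?thesis"
      have "decr M N thr cws (take (tau stp ys) ys) = m"
        by (rule dec_ok[OF hm]) (use na in blast)
      then show False using True by simp
    qed
    then obtain n m' where nm: "N \<le> n" "n \<le> K" "m' < M" "m' \<noteq> m"
      "matchN P Q N thr (cws!m') (take N (drop (n - N) ys))"
      by blast
    have "1 \<le> (\<Sum>m'\<in>{..<M} - {m}. if matchN P Q N thr (cws!m') (take N (drop (n - N) ys)) then 1 else (0::real))"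
      using nm by (intro member_le_sum[of m', THEN order_trans[rotated]]) auto
    also have "\<dots> \<le> (\<Sum>n\<in>{N..K}. \<Sum>m'\<in>{..<M} - {m}. if matchN P Q N thr (cws!m') (take N (drop (n - N) ys)) then 1 else (0::real))"
      using nm by (intro member_le_sum[of n] sum_nonneg) auto
    finally show ?thesis using True hm by simp
  next
    case False
    then show ?thesis using nn by simp
  qed
next
  case False
  then show ?thesis using nn by simp
qed
qed

lemma delay_ind:
  "real (tau stp ys - l) \<le> real (N - 1) + real K * (if matchN P Q N thr (cws!m) (take N (drop (l-1) ys)) then 0 else 1)"
proof (cases "matchN P Q N thr (cws!m) (take N (drop (l-1) ys))")
  case True
  then have "tau stp ys \<le> l + N - 1" by (rule hit)
  then show ?thesis using True l by simp
next
  case False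
  then show ?thesis using tau_leK by simp
qed

end
end


lemma async_inp: "async_input (\<lambda>m j. cws!m!j) N star m l i = inp (cws!m) N star l i"
  unfolding async_input_def inp_def by simp

context cset begin

definition Emiss :: "nat \<Rightarrow> nat \<Rightarrow> real \<Rightarrow> 'x \<Rightarrow> 'x list \<Rightarrow> nat \<Rightarrow> real" where
  "Emiss K N thr star x l = (\<Sum>ys\<in>{ys::'y list. length ys = K}. pout (\<lambda>i y. Q (inp x N star l (Suc i)) y) ys
      * (if matchN P Q N thr x (take N (drop (l-1) ys)) then 0 else 1))"

definition Efa :: "nat \<Rightarrow> nat \<Rightarrow> real \<Rightarrow> 'x \<Rightarrow> 'x list \<Rightarrow> 'x list \<Rightarrow> nat \<Rightarrow> nat \<Rightarrow> real" where
  "Efa K N thr star x x' l n = (\<Sum>ys\<in>{ys::'y list. length ys = K}. pout (\<lambda>i y. Q (inp x N star l (Suc i)) y) ys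
      * (if matchN P Q N thr x' (take N (drop (n-N) ys)) then 1 else 0))"

lemma forced_gen: "length zs = K \<Longrightarrow> stopr K M N thr cws zs"
  unfolding stopr_def by simp

lemma Emiss_nn: "0 \<le> Emiss K N thr star x l"
  unfolding Emiss_def
  by (intro sum_nonneg mult_nonneg_nonneg chan.pout_nn[OF dmc_chan[OF dmcQ]]) simp

lemma Efa_nn: "0 \<le> Efa K N thr star x x' l n"
  unfolding Efa_def
  by (intro sum_nonneg mult_nonneg_nonneg chan.pout_nn[OF dmc_chan[OF dmcQ]]) simp

context
  fixes K M N A :: nat and thr :: real and cws :: "'x list list" and m l :: nat and star :: 'x
  assumes K: "K = A + N - 1" and N1: "1 \<le> N" and m: "m < M" and l: "1 \<le> l" "l \<le> A"
begin

lemma err_bound: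
  "err_prob Q (\<lambda>m j. cws!m!j) N star (stopr K M N thr cws) (decr M N thr cws) m l
   \<le> ennreal (Emiss K N thr star (cws!m) l + (\<Sum>n\<in>{N..K}. \<Sum>m'\<in>{..<M} - {m}. Efa K N thr star (cws!m) (cws!m') l n))"
proof -
  interpret chan "\<lambda>i y. Q (inp (cws!m) N star l (Suc i)) y" by (rule dmc_chan[OF dmcQ])
  have "err_prob Q (\<lambda>m j. cws!m!j) N star (stopr K M N thr cws) (decr M N thr cws) m l
     = ennreal (\<Sum>ys\<in>{ys::'y list. length ys = K}. pout (\<lambda>i y. Q (inp (cws!m) N star l (Suc i)) y) ys
         * (if decr M N thr cws (take (tau (stopr K M N thr cws) ys) ys) \<noteq> m then 1 else 0))"
    using err_prob_eq[OF dmcQ forced_gen, where c="\<lambda>m j. cws!m!j" and star=star and dec="decr M N thr cws" and m=m and l=l]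
    by (simp add: async_inp)
  also have "\<dots> \<le> ennreal (\<Sum>ys\<in>{ys::'y list. length ys = K}. pout (\<lambda>i y. Q (inp (cws!m) N star l (Suc i)) y) ys
         * ((if matchN P Q N thr (cws!m) (take N (drop (l-1) ys)) then 0 else 1)
     + (\<Sum>n\<in>{N..K}. \<Sum>m'\<in>{..<M} - {m}. if matchN P Q N thr (cws!m') (take N (drop (n - N) ys)) then 1 else 0)))"
    by (intro ennreal_leI sum_mono mult_left_mono pout_nn err_ind[OF K N1 m l]) simp
  also have "(\<Sum>ys\<in>{ys::'y list. length ys = K}. pout (\<lambda>i y. Q (inp (cws!m) N star l (Suc i)) y) ys
         * ((if matchN P Q N thr (cws!m) (take N (drop (l-1) ys)) then 0 else 1)
     + (\<Sum>n\<in>{N..K}. \<Sum>m'\<in>{..<M} - {m}. if matchN P Q N thr (cws!m') (take N (drop (n - N) ys)) then 1 else 0)))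
     = Emiss K N thr star (cws!m) l + (\<Sum>n\<in>{N..K}. \<Sum>m'\<in>{..<M} - {m}. Efa K N thr star (cws!m) (cws!m') l n)"
    unfolding Emiss_def Efa_def distrib_left sum.distrib sum_distrib_left
    by (simp add: sum.swap[of _ "{ys::'y list. length ys = K}"])
  finally show ?thesis .
qed

lemma delay_bound:
  "exp_delay Q (\<lambda>m j. cws!m!j) N star (stopr K M N thr cws) m l
   \<le> ennreal (real (N - 1) + real K * Emiss K N thr star (cws!m) l)"
proof -
  interpret chan "\<lambda>i y. Q (inp (cws!m) N star l (Suc i)) y" by (rule dmc_chan[OF dmcQ])
  have "exp_delay Q (\<lambda>m j. cws!m!j) N star (stopr K M N thr cws) m l
     = ennreal (\<Sum>ys\<in>{ys::'y list. length ys = K}. pout (\<lambda>i y. Q (inp (cws!m) N star l (Suc i)) y) ys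
         * real (tau (stopr K M N thr cws) ys - l))"
    using exp_delay_eq[OF dmcQ forced_gen, where c="\<lambda>m j. cws!m!j" and star=star and m=m and l=l]
    by (simp add: async_inp)
  also have "\<dots> \<le> ennreal (\<Sum>ys\<in>{ys::'y list. length ys = K}. pout (\<lambda>i y. Q (inp (cws!m) N star l (Suc i)) y) ys
         * (real (N - 1) + real K * (if matchN P Q N thr (cws!m) (take N (drop (l-1) ys)) then 0 else 1)))"
    by (intro ennreal_leI sum_mono mult_left_mono pout_nn delay_ind[OF K N1 m l]) simp
  also have "(\<Sum>ys\<in>{ys::'y list. length ys = K}. pout (\<lambda>i y. Q (inp (cws!m) N star l (Suc i)) y) ys
         * (real (N - 1) + real K * (if matchN P Q N thr (cws!m) (take N (drop (l-1) ys)) then 0 else 1)))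
     = real (N - 1) + real K * Emiss K N thr star (cws!m) l"
    unfolding Emiss_def distrib_left sum.distrib
    by (simp add: sum_distrib_left[symmetric] sum_distrib_right[symmetric] pout_total mult_ac)
  finally show ?thesis .
qed

end
end


lemma swap_w: "(\<Sum>c\<in>C. w c * (\<Sum>i\<in>I. f i c)) = (\<Sum>i\<in>I. \<Sum>c\<in>C. w c * f i c :: real)"
  by (simp only: sum_distrib_left) (rule sum.swap)

context cset begin

lemma single_avg:
  assumes m: "m < M" and M2: "2 \<le> M"
  shows "(\<Sum>cws\<in>{cws. set cws \<subseteq> {x::'x list. length x = N} \<and> length cws = M}. (\<Prod>i<M. Pn P (cws!i)) * F (cws!m))
       = (\<Sum>a\<in>{x::'x list. length x = N}. Pn P a * F a)"
proof -
  define m' where "m' = (if m = 0 then 1 else 0::nat)"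
  have m': "m' < M" "m \<noteq> m'" using M2 m unfolding m'_def by auto
  have "(\<Sum>cws\<in>{cws. set cws \<subseteq> {x::'x list. length x = N} \<and> length cws = M}. (\<Prod>i<M. Pn P (cws!i)) * (\<lambda>a b. F a) (cws!m) (cws!m'))
     = (\<Sum>a\<in>{x::'x list. length x = N}. \<Sum>b\<in>{x::'x list. length x = N}. Pn P a * Pn P b * F a)"
    by (rule pair_avg[OF finite_len Pn_sum m m'(1) m'(2)])
  also have "\<dots> = (\<Sum>a\<in>{x::'x list. length x = N}. Pn P a * F a)"
    by (simp add: sum_distrib_right[symmetric] sum_distrib_left[symmetric] mult_ac Pn_sum
        flip: sum_distrib_left)
  finally show ?thesis by simp
qed

lemma fa_avg:
  assumes n: "N \<le> n" "n \<le> K" and thr: "0 < thr"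
  shows "(\<Sum>a\<in>{x::'x list. length x = N}. \<Sum>b\<in>{x::'x list. length x = N}. Pn P a * Pn P b * Efa K N thr star a b l n) \<le> 1 / thr"
proof -
  have inner: "(\<Sum>b\<in>{x::'x list. length x = N}. Pn P b * Efa K N thr star a b l n) \<le> 1 / thr" for a
  proof -
    interpret chan "\<lambda>i y. Q (inp a N star l (Suc i)) y" by (rule dmc_chan[OF dmcQ])
    have "(\<Sum>b\<in>{x::'x list. length x = N}. Pn P b * Efa K N thr star a b l n)
       = (\<Sum>ys\<in>{ys::'y list. length ys = K}. pout (\<lambda>i y. Q (inp a N star l (Suc i)) y) ys *
           (\<Sum>b\<in>{x::'x list. length x = N}. Pn P b * (if matchN P Q N thr b (take N (drop (n-N) ys)) then 1 else 0)))"
      unfolding Efa_def sum_distrib_left by (subst sum.swap) (simp add: mult_ac)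
    also have "\<dots> \<le> (\<Sum>ys\<in>{ys::'y list. length ys = K}. pout (\<lambda>i y. Q (inp a N star l (Suc i)) y) ys * (1 / thr))"
      using n by (intro sum_mono mult_left_mono pout_nn false_alarm thr) auto
    also have "\<dots> = 1 / thr" by (simp add: sum_divide_distrib[symmetric] pout_total)
    finally show ?thesis .
  qed
  have "(\<Sum>a\<in>{x::'x list. length x = N}. \<Sum>b\<in>{x::'x list. length x = N}. Pn P a * Pn P b * Efa K N thr star a b l n)
      = (\<Sum>a\<in>{x::'x list. length x = N}. Pn P a * (\<Sum>b\<in>{x::'x list. length x = N}. Pn P b * Efa K N thr star a b l n))"
    by (simp add: sum_distrib_left mult_ac)
  also have "\<dots> \<le> (\<Sum>a\<in>{x::'x list. length x = N}. Pn P a * (1 / thr))"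
    by (intro sum_mono mult_left_mono inner Pn_nn)
  also have "\<dots> = 1 / thr" by (simp add: sum_divide_distrib[symmetric] Pn_sum)
  finally show ?thesis .
qed

end


context cset begin

lemma code_exists:
  fixes star :: 'x and T :: real
  assumes N1: "1 \<le> N" and A1: "1 \<le> A" and M2: "2 \<le> M" and K: "K = A + N - 1" and s: "0 \<le> s"
  defines "\<delta> \<equiv> Gf P Q T s ^ N + real K * real M / exp (real N * T)"
  shows "\<exists>(c::nat \<Rightarrow> nat \<Rightarrow> 'x) (stop::'y list \<Rightarrow> bool) (dec::'y list \<Rightarrow> nat).
           avg_err Q star A M N c stop dec \<le> ennreal \<delta> \<and>
           avg_delay Q star A M N c stop \<le> ennreal (real (N - 1) + real K * \<delta>)"
proof -
  define thr where "thr = exp (real N * T)"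
  have thr: "0 < thr" unfolding thr_def by simp
  define SN where "SN = {x::'x list. length x = N}"
  define C where "C = {cws. set cws \<subseteq> SN \<and> length cws = M}"
  define w where "w cws = (\<Prod>i<M. Pn P (cws!i))" for cws
  define Fo where "Fo cws = (\<Sum>m<M. \<Sum>l\<in>{1..A}. Emiss K N thr star (cws!m) l
      + (\<Sum>n\<in>{N..K}. \<Sum>m'\<in>{..<M} - {m}. Efa K N thr star (cws!m) (cws!m') l n))" for cws
  have finC: "finite C" unfolding C_def SN_def by (rule finite_lists_length_eq) simp
  have wnn: "0 \<le> w c" for c unfolding w_def by (intro prod_nonneg Pn_nn)
  have w1: "(\<Sum>c\<in>C. w c) = 1"
    unfolding C_def w_def SN_def
    by (subst lsum_prod[OF finite_len, where f="\<lambda>i x. Pn P x"]) (simp add: Pn_sum)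
  have G: "0 \<le> Gf P Q T s" by (rule Gf_nn)
  have E1: "(\<Sum>c\<in>C. w c * Emiss K N thr star (c!m) l) \<le> Gf P Q T s ^ N" if "m < M" "l \<in> {1..A}" for m l
  proof -
    have "(\<Sum>c\<in>C. w c * Emiss K N thr star (c!m) l) = (\<Sum>a\<in>SN. Pn P a * Emiss K N thr star a l)"
      unfolding C_def w_def SN_def by (rule single_avg[OF that(1) M2])
    also have "\<dots> \<le> Gf P Q T s ^ N"
    proof -
      have l1: "Suc (l - 1) = l" using that by auto
      have "l - 1 + N \<le> K" using that K by auto
      from miss_bound[OF this s, of star T]
      show ?thesis unfolding SN_def Emiss_def thr_def l1 .
    qed
    finally show ?thesis .
  qed
  have E2: "(\<Sum>c\<in>C. w c * Efa K N thr star (c!m) (c!m') l n) \<le> 1 / thr"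
    if "m < M" "m' \<in> {..<M} - {m}" "n \<in> {N..K}" for m m' l n
  proof -
    have "(\<Sum>c\<in>C. w c * Efa K N thr star (c!m) (c!m') l n)
       = (\<Sum>a\<in>SN. \<Sum>b\<in>SN. Pn P a * Pn P b * Efa K N thr star a b l n)"
      unfolding C_def w_def SN_def using that
      by (intro pair_avg[OF finite_len Pn_sum, where F="\<lambda>a b. Efa K N thr star a b l n"]) auto
    also have "\<dots> \<le> 1 / thr" unfolding SN_def using that by (intro fa_avg thr) auto
    finally show ?thesis .
  qed
  have cardNK: "card {N..K} \<le> K" using K N1 by simp
  have "(\<Sum>c\<in>C. w c * Fo c)
     = (\<Sum>m<M. \<Sum>l\<in>{1..A}. (\<Sum>c\<in>C. w c * Emiss K N thr star (c!m) l)
        + (\<Sum>n\<in>{N..K}. \<Sum>m'\<in>{..<M} - {m}. \<Sum>c\<in>C. w c * Efa K N thr star (c!m) (c!m') l n))"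
    unfolding Fo_def swap_w distrib_left sum.distrib ..
  also have "\<dots> \<le> (\<Sum>m<M. \<Sum>l\<in>{1..A}. Gf P Q T s ^ N + (\<Sum>n\<in>{N..K}. \<Sum>m'\<in>{..<M} - {m}. 1 / thr))"
    by (intro sum_mono add_mono E1 E2) auto
  also have "\<dots> = real M * real A * (Gf P Q T s ^ N + real (card {N..K}) * (real (M - 1)) / thr)"
    using M2 by (simp add: card_Diff_singleton_if of_nat_diff)
  also have "\<dots> \<le> real M * real A * \<delta>"
  proof -
    have "real (card {N..K}) * real (M - 1) \<le> real K * real M"
      using cardNK by (intro mult_mono) auto
    then have "real (card {N..K}) * real (M - 1) / thr \<le> real K * real M / thr"
      using thr by (simp add: divide_right_mono)
    then show ?thesis unfolding \<delta>_def thr_def by (intro mult_left_mono) auto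
  qed
  finally have avg: "(\<Sum>c\<in>C. w c * Fo c) \<le> real M * real A * \<delta>" .
  obtain cws where cws: "cws \<in> C" "Fo cws \<le> real M * real A * \<delta>"
    using averaging[OF finC wnn w1 avg] by blast
  have AM: "0 < real (A * M)" using A1 M2 by simp
  let ?c = "\<lambda>m j. cws!m!j" and ?st = "stopr K M N thr cws" and ?dc = "decr M N thr cws"
  have Xnn: "0 \<le> Emiss K N thr star (cws!m) l + (\<Sum>n\<in>{N..K}. \<Sum>m'\<in>{..<M} - {m}. Efa K N thr star (cws!m) (cws!m') l n)" for m l
    by (intro add_nonneg_nonneg sum_nonneg Emiss_nn Efa_nn)
  have Fo_nn: "0 \<le> Fo cws" unfolding Fo_def by (intro sum_nonneg Xnn)
  have "avg_err Q star A M N ?c ?st ?dc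
     \<le> (\<Sum>m<M. \<Sum>l\<in>{1..A}. ennreal (Emiss K N thr star (cws!m) l + (\<Sum>n\<in>{N..K}. \<Sum>m'\<in>{..<M} - {m}. Efa K N thr star (cws!m) (cws!m') l n))) / ennreal (real (A * M))"
    unfolding avg_err_def
    by (intro divide_right_mono_ennreal sum_mono err_bound[OF K N1]) auto
  also have "\<dots> = ennreal (Fo cws / real (A * M))"
    unfolding Fo_def using AM by (simp add: Xnn sum_nonneg divide_ennreal)
  also have "\<dots> \<le> ennreal \<delta>"
    using cws(2) AM by (intro ennreal_leI) (simp add: divide_le_eq mult_ac)
  finally have e: "avg_err Q star A M N ?c ?st ?dc \<le> ennreal \<delta>" .
  have Em_le: "(\<Sum>m<M. \<Sum>l\<in>{1..A}. Emiss K N thr star (cws!m) l) \<le> Fo cws"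
    unfolding Fo_def by (intro sum_mono) (simp add: sum_nonneg Efa_nn)
  have "avg_delay Q star A M N ?c ?st
     \<le> (\<Sum>m<M. \<Sum>l\<in>{1..A}. ennreal (real (N - 1) + real K * Emiss K N thr star (cws!m) l)) / ennreal (real (A * M))"
    unfolding avg_delay_def
    by (intro divide_right_mono_ennreal sum_mono delay_bound[OF K N1]) auto
  also have "\<dots> = ennreal ((\<Sum>m<M. \<Sum>l\<in>{1..A}. (real (N - 1) + real K * Emiss K N thr star (cws!m) l)) / real (A * M))"
    using AM by (simp add: Emiss_nn sum_nonneg divide_ennreal del: ennreal_plus)
  also have "\<dots> \<le> ennreal (real (N - 1) + real K * \<delta>)"
  proof (intro ennreal_leI)
    have "(\<Sum>m<M. \<Sum>l\<in>{1..A}. (real (N - 1) + real K * Emiss K N thr star (cws!m) l))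
        = real (A * M) * real (N - 1) + real K * (\<Sum>m<M. \<Sum>l\<in>{1..A}. Emiss K N thr star (cws!m) l)"
      by (simp add: sum.distrib sum_distrib_left)
    also have "\<dots> \<le> real (A * M) * real (N - 1) + real K * (real M * real A * \<delta>)"
      using Em_le cws(2) by (intro add_left_mono mult_left_mono) auto
    also have "\<dots> = real (A * M) * (real (N - 1) + real K * \<delta>)" by (simp add: algebra_simps)
    finally show "(\<Sum>m<M. \<Sum>l\<in>{1..A}. (real (N - 1) + real K * Emiss K N thr star (cws!m) l)) / real (A * M)
        \<le> real (N - 1) + real K * \<delta>"
      using AM by (simp add: divide_le_eq mult_ac)
  qed
  finally have d: "avg_delay Q star A M N ?c ?st \<le> ennreal (real (N - 1) + real K * \<delta>)" .
  show ?thesis using e d by blast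
qed

end


lemma exists_good_P:
  fixes Q :: "'x::finite \<Rightarrow> 'y::finite \<Rightarrow> real" and star :: 'x
  assumes "R < capacity Q"
  shows "\<exists>P\<in>input_distrs. R < mutual_info P Q"
proof -
  have ne: "input_distrs \<noteq> ({} :: ('x \<Rightarrow> real) set)"
  proof -
    have "(\<lambda>x. if x = star then 1 else 0::real) \<in> input_distrs"
      unfolding input_distrs_def by auto
    then show ?thesis by blast
  qed
  show ?thesis
  proof (cases "bdd_above ((\<lambda>P. mutual_info P Q) ` input_distrs)")
    case True
    then show ?thesis using assms less_cSUP_iff[OF ne True] unfolding capacity_def by blast
  next
    case False
    then have "\<not> (\<forall>x\<in>(\<lambda>P. mutual_info P Q) ` input_distrs. x \<le> R)" unfolding bdd_above_def by blast
    then show ?thesis by force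
  qed
qed

lemma exp_nat_pow: "exp (a * real N) = exp a ^ N"
  by (metis exp_of_nat_mult mult.commute)

lemma nat_ceiling_le: "0 \<le> x \<Longrightarrow> real (nat \<lceil>x\<rceil>) \<le> x + 1"
  by linarith

lemma nat_ceiling_ge: "0 \<le> x \<Longrightarrow> x \<le> real (nat \<lceil>x\<rceil>)"
  by linarith



theorem corollary1:
  fixes Q :: "'x::finite \<Rightarrow> 'y::finite \<Rightarrow> real" and star :: 'x and R :: real
  assumes "dmc Q"
    and "\<forall>y. \<exists>x. Q x y > 0"
    and "capacity Q > 0"
    and "0 < R" and "R < capacity Q"
  shows "\<exists>\<alpha>>0. achievable_async_exponent Q star \<alpha> R"
proof -
  obtain P where P: "P \<in> input_distrs" "R < mutual_info P Q"
    using exists_good_P[OF assms(5)] by blast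
  interpret cset P Q using P(1) assms(1) unfolding input_distrs_def cset_def by auto
  define I where "I = mutual_info P Q"
  define d0 where "d0 = I - R"
  have d0: "0 < d0" unfolding d0_def I_def using P by simp
  define T where "T = R + d0 / 2"
  define R' where "R' = R + d0 / 8"
  have TI: "T < mutual_info P Q" unfolding T_def d0_def I_def using P(2) by (simp add: field_simps)
  obtain s where s: "0 < s" "Gf P Q T s < 1" using Gf_lt1[OF TI] by blast
  define g where "g = Gf P Q T s"
  have g: "0 \<le> g" "g < 1" unfolding g_def using s Gf_nn by auto
  define \<alpha> where "\<alpha> = min (d0 / 16) (if g = 0 then 1 else - ln g / 2)"
  have \<alpha>: "0 < \<alpha>"
  proof -
    have "g \<noteq> 0 \<Longrightarrow> ln g < 0" using g by simp
    then show ?thesis unfolding \<alpha>_def using d0 by auto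
  qed
  have q1: "exp \<alpha> * g < 1"
  proof (cases "g = 0")
    case True then show ?thesis by simp
  next
    case False
    then have gp: "0 < g" using g by simp
    have "exp \<alpha> * g \<le> exp (- ln g / 2) * g"
      using False g unfolding \<alpha>_def by (intro mult_right_mono) auto
    also have "\<dots> = exp (ln g / 2)"
      using gp by (simp add: exp_diff exp_minus field_simps flip: exp_add)
    also have "\<dots> < 1" using gp g by simp
    finally show ?thesis .
  qed
  define q2 where "q2 = exp (2 * \<alpha> + R' - T)"
  have q2: "q2 < 1" "0 < q2"
  proof -
    have "\<alpha> \<le> d0 / 16" unfolding \<alpha>_def by simp
    then have "2 * \<alpha> + R' - T < 0" unfolding R'_def T_def using d0 by simp
    then show "q2 < 1" "0 < q2" unfolding q2_def by auto
  qed
  have R'pos: "0 < R'" unfolding R'_def using d0 assms(4) by simp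
  show ?thesis
  proof (intro exI[of _ \<alpha>] conjI \<alpha>, unfold achievable_async_exponent_def, intro allI impI)
    fix \<epsilon> :: real assume eps: "0 < \<epsilon>"
    define cc where "cc = 1 + 1 / \<alpha>"
    have cc: "1 \<le> cc" unfolding cc_def using \<alpha> by simp
    define U where "U N = cc * (exp \<alpha> * g) ^ N + 2 * cc^2 * q2 ^ N" for N :: nat
    have "U \<longlonglongrightarrow> cc * 0 + 2 * cc^2 * 0"
      unfolding U_def using q1 q2 g
      by (intro tendsto_intros LIMSEQ_power_zero) (auto simp: abs_of_nonneg)
    then have "U \<longlonglongrightarrow> 0" by simp
    then have "eventually (\<lambda>N. U N < min 1 \<epsilon>) sequentially"
      using eps by (intro order_tendstoD(2)) auto
    then obtain N0 where N0: "\<And>N. N \<ge> N0 \<Longrightarrow> U N < min 1 \<epsilon>"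
      unfolding eventually_sequentially by blast
    show "\<exists>N0. \<forall>N\<ge>N0. \<exists>(M::nat) (c::nat \<Rightarrow> nat \<Rightarrow> 'x) (stop::'y list \<Rightarrow> bool) (dec::'y list \<Rightarrow> nat).
        let A = nat \<lceil>exp ((\<alpha> - \<epsilon>) * real N)\<rceil> in
        M \<ge> 2 \<and>
        avg_err Q star A M N c stop dec \<le> ennreal \<epsilon> \<and>
        ennreal (R - \<epsilon>) * avg_delay Q star A M N c stop \<le> ennreal (ln (real M))"
    proof (rule exI[of _ "max N0 1"], intro allI impI)
      fix N :: nat assume N: "max N0 1 \<le> N"
      define A where "A = nat \<lceil>exp ((\<alpha> - \<epsilon>) * real N)\<rceil>"
      define M where "M = nat \<lceil>exp (R' * real N)\<rceil>"
      define K where "K = A + N - 1"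
      have N1: "1 \<le> N" using N by simp
      have UN: "U N < min 1 \<epsilon>" using N0 N by simp
      have A1: "1 \<le> A"
      proof -
        have "0 < real A" unfolding A_def
          using nat_ceiling_ge[of "exp ((\<alpha> - \<epsilon>) * real N)"] exp_gt_zero[of "(\<alpha> - \<epsilon>) * real N"]
          by linarith
        then show ?thesis by simp
      qed
      have Ale: "real A \<le> exp (\<alpha> * real N) + 1"
      proof -
        have "real A \<le> exp ((\<alpha> - \<epsilon>) * real N) + 1" unfolding A_def by (rule nat_ceiling_le) simp
        also have "exp ((\<alpha> - \<epsilon>) * real N) \<le> exp (\<alpha> * real N)" using eps by (simp add: algebra_simps)
        finally show ?thesis by simp
      qed
      have expR1: "1 < exp (R' * real N)" using R'pos N1 by simp
      have M2: "2 \<le> M" unfolding M_def using expR1 by linarith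
      have Mge: "exp (R' * real N) \<le> real M" unfolding M_def by (rule nat_ceiling_ge) simp
      have Mle: "real M \<le> 2 * exp (R' * real N)"
        using nat_ceiling_le[of "exp (R' * real N)", OF less_imp_le[OF exp_gt_zero]] expR1 unfolding M_def by linarith
      have lnM: "R' * real N \<le> ln (real M)"
        using Mge by (metis exp_gt_zero ln_exp ln_le_cancel_iff order_less_le_trans)
      have Kle: "real K \<le> cc * exp (\<alpha> * real N)"
      proof -
        have "real N \<le> exp (\<alpha> * real N) / \<alpha>"
        proof -
          have "\<alpha> * real N \<le> exp (\<alpha> * real N)" using exp_ge_add_one_self[of "\<alpha> * real N"] by linarith
          then show ?thesis using \<alpha> by (simp add: le_divide_eq mult.commute)
        qed
        moreover have "real K = real A + real N - 1" unfolding K_def using A1 by simp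
        ultimately show ?thesis using Ale unfolding cc_def by (simp add: algebra_simps)
      qed
      have K1: "1 \<le> real K" unfolding K_def using A1 N1 by simp
      obtain c stop dec where cd:
        "avg_err Q star A M N c stop dec \<le> ennreal (Gf P Q T s ^ N + real K * real M / exp (real N * T))"
        "avg_delay Q star A M N c stop \<le> ennreal (real (N - 1) + real K * (Gf P Q T s ^ N + real K * real M / exp (real N * T)))"
        using code_exists[OF N1 A1 M2 K_def less_imp_le[OF s(1)], of star T] by blast
      define \<delta> where "\<delta> = g ^ N + real K * real M / exp (real N * T)"
      have \<delta>nn: "0 \<le> \<delta>" unfolding \<delta>_def using g by simp
      have KdU: "real K * \<delta> \<le> U N"
      proof -
        have e1: "real K * g ^ N \<le> cc * (exp \<alpha> * g) ^ N"
        proof -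
          have "real K * g ^ N \<le> cc * exp (\<alpha> * real N) * g ^ N"
            using Kle g by (intro mult_right_mono) auto
          also have "\<dots> = cc * (exp \<alpha> * g) ^ N" by (simp add: exp_nat_pow power_mult_distrib)
          finally show ?thesis .
        qed
        have e2: "real K * (real K * real M / exp (real N * T)) \<le> 2 * cc^2 * q2 ^ N"
        proof -
          have "real K * real K * real M \<le> (cc * exp (\<alpha> * real N)) * (cc * exp (\<alpha> * real N)) * (2 * exp (R' * real N))"
            using Kle K1 Mle by (intro mult_mono) auto
          also have "\<dots> = 2 * cc^2 * exp ((2 * \<alpha> + R') * real N)"
            by (simp add: power2_eq_square algebra_simps flip: exp_add)
          finally have "real K * real K * real M / exp (real N * T) \<le> 2 * cc^2 * exp ((2 * \<alpha> + R') * real N) / exp (real N * T)"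
            by (simp add: divide_right_mono)
          also have "\<dots> = 2 * cc^2 * q2 ^ N"
          proof -
            have "q2 ^ N = exp ((2 * \<alpha> + R' - T) * real N)" unfolding q2_def exp_nat_pow ..
            also have "\<dots> = exp ((2 * \<alpha> + R') * real N) / exp (real N * T)"
              by (subst exp_diff[symmetric]) (simp add: algebra_simps)
            finally show ?thesis by simp
          qed
          finally show ?thesis by (simp add: mult.assoc)
        qed
        show ?thesis unfolding \<delta>_def U_def using e1 e2 by (simp add: distrib_left)
      qed
      have Kd1: "real K * \<delta> < 1" and Kde: "real K * \<delta> < \<epsilon>" using KdU UN by auto
      have de: "\<delta> \<le> \<epsilon>"
      proof -
        have "\<delta> \<le> real K * \<delta>" using K1 \<delta>nn by (simp add: mult_le_cancel_right1)
        then show ?thesis using Kde by simp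
      qed
      have err: "avg_err Q star A M N c stop dec \<le> ennreal \<epsilon>"
        using cd(1) de unfolding \<delta>_def g_def by (metis ennreal_leI order_trans)
      have del: "ennreal (R - \<epsilon>) * avg_delay Q star A M N c stop \<le> ennreal (ln (real M))"
      proof (cases "R - \<epsilon> \<le> 0")
        case True then show ?thesis by (simp add: ennreal_neg)
      next
        case False
        have "ennreal (R - \<epsilon>) * avg_delay Q star A M N c stop \<le> ennreal (R - \<epsilon>) * ennreal (real (N - 1) + real K * \<delta>)"
          using cd(2) unfolding \<delta>_def g_def by (intro mult_left_mono) auto
        also have "\<dots> = ennreal ((R - \<epsilon>) * (real (N - 1) + real K * \<delta>))"
          using False \<delta>nn by (simp add: ennreal_mult)
        also have "\<dots> \<le> ennreal (ln (real M))"
        proof (rule ennreal_leI)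
          have "real (N - 1) + real K * \<delta> \<le> real N" using Kd1 N1 by (simp add: of_nat_diff)
          then have "(R - \<epsilon>) * (real (N - 1) + real K * \<delta>) \<le> R * real N"
            using False eps \<delta>nn K1 assms(4)
            by (intro mult_mono) (auto intro!: add_nonneg_nonneg mult_nonneg_nonneg)
          also have "\<dots> \<le> R' * real N" unfolding R'_def using d0 by (intro mult_right_mono) auto
          also have "\<dots> \<le> ln (real M)" by (rule lnM)
          finally show "(R - \<epsilon>) * (real (N - 1) + real K * \<delta>) \<le> ln (real M)" .
        qed
        finally show ?thesis .
      qed
      have fin: "M \<ge> 2 \<and> avg_err Q star A M N c stop dec \<le> ennreal \<epsilon> \<and>
        ennreal (R - \<epsilon>) * avg_delay Q star A M N c stop \<le> ennreal (ln (real M))"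
        using M2 err del by blast
      show "\<exists>M' c' stop' dec'.
        let A' = nat \<lceil>exp ((\<alpha> - \<epsilon>) * real N)\<rceil> in
        M' \<ge> 2 \<and>
        avg_err Q star A' M' N c' stop' dec' \<le> ennreal \<epsilon> \<and>
        ennreal (R - \<epsilon>) * avg_delay Q star A' M' N c' stop' \<le> ennreal (ln (real M'))"
        unfolding Let_def A_def[symmetric] using fin by blast
    qed
  qed
qed


end
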